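(* Let $q\ge2$, $n\ge1$, $\tau\ge0$, and let $m$ be an integer with $m\in[n-\tau n,n+\tau n]$. Let $\mathbf r\in R_q(m)$ be a constant word and suppose $\kappa^\ast=\frac{\tau n+n-m}{2n}\le\frac{q-1}{q}$. Then $$|\mathcal{B}(\mathbf r,\tau n)\cap\Sigma_q^n|=q^{n\left(H_q(\kappa^\ast)+O\left(\frac{\log_q n}{n}\right)\right)}.$$
   Context: $\Sigma_q$ is a finite alphabet of size $q$. $R_q(m)=\{(\alpha,\alpha,\dots,\alpha)\in\Sigma_q^m:\alpha\in\Sigma_q\}$. The insdel distance $d(\mathbf a,\mathbf b)$ between words (lengths may differ) is the minimum number of single-symbol insertions and deletions needed to transform $\mathbf a$ into $\mathbf b$. For $\mathbf u\in\Sigma_q^m$ and real $z\ge0$, $\mathcal{B}(\mathbf u,z)=\{\mathbf v\in\bigcup_{i=\max\{m-z,0\}}^{m+z}\Sigma_q^i: d(\mathbf u,\mathbf v)\le z\}$. $H_q(x)=x\log_q(q-1)-x\log_qx-(1-x)\log_q(1-x)$ for $0<x<1$, $H_q(0)=H_q(1)=0$. *)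

theory Defs
  imports Complex_Main
begin

text \<open>Alphabet Sigma_q is modelled as the naturals below q; words are lists.\<close>

definition words :: "nat \<Rightarrow> nat \<Rightarrow> nat list set" where
  "words q n = {v. length v = n \<and> set v \<subseteq> {..<q}}"

definition const_words :: "nat \<Rightarrow> nat \<Rightarrow> nat list set" where
  "const_words q m = {replicate m a | a. a < q}"

definition insdel_step :: "nat list \<Rightarrow> nat list \<Rightarrow> bool" where
  "insdel_step a b \<longleftrightarrow>
     (\<exists>xs y ys. a = xs @ y # ys \<and> b = xs @ ys) \<or>
     (\<exists>xs y ys. b = xs @ y # ys \<and> a = xs @ ys)"

definition insdel_dist :: "nat list \<Rightarrow> nat list \<Rightarrow> nat" where
  "insdel_dist a b = (LEAST k. (insdel_step ^^ k) a b)"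

definition insdel_ball :: "nat \<Rightarrow> nat list \<Rightarrow> real \<Rightarrow> nat list set" where
  "insdel_ball q u z = {v. set v \<subseteq> {..<q} \<and>
      max (real (length u) - z) 0 \<le> real (length v) \<and> real (length v) \<le> real (length u) + z \<and>
      real (insdel_dist u v) \<le> z}"

definition Hq :: "nat \<Rightarrow> real \<Rightarrow> real" where
  "Hq q x = (if x = 0 \<or> x = 1 then 0 else
     x * log (real q) (real q - 1) - x * log (real q) x - (1 - x) * log (real q) (1 - x))"

end

theory Submission
  imports Defs "HOL-Library.FuncSet"
begin

definition oth :: "nat \<Rightarrow> nat list \<Rightarrow> nat" where
  "oth a w = length (filter (\<lambda>x. x \<noteq> a) w)"
definition cnt :: "nat \<Rightarrow> nat list \<Rightarrow> nat" where
  "cnt a w = length (filter ((=) a) w)"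
definition phi :: "nat \<Rightarrow> nat \<Rightarrow> nat list \<Rightarrow> nat" where
  "phi a m w = oth a w + (if cnt a w \<ge> m then cnt a w - m else m - cnt a w)"

lemma step_phi: "insdel_step u w \<Longrightarrow> phi a m w \<le> phi a m u + 1"
  unfolding insdel_step_def phi_def oth_def cnt_def
  by (auto split: if_splits)

lemma pow_phi: "(insdel_step ^^ k) u w \<Longrightarrow> phi a m w \<le> phi a m u + k"
proof (induction k arbitrary: w)
  case 0 then show ?case by simp
next
  case (Suc k)
  from Suc.prems obtain z where "(insdel_step ^^ k) u z" "insdel_step z w"
    by (auto elim: relpowp_Suc_E)
  with Suc.IH[of z] step_phi[of z w a m] show ?case by simp
qed

lemma step_sym: "insdel_step u w \<Longrightarrow> insdel_step w u"
  unfolding insdel_step_def by blast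

lemma pow_sym: "(insdel_step ^^ k) u w \<Longrightarrow> (insdel_step ^^ k) w u"
proof (induction k arbitrary: w)
  case 0 then show ?case by simp
next
  case (Suc k)
  from Suc.prems obtain z where "(insdel_step ^^ k) u z" "insdel_step z w"
    by (auto elim: relpowp_Suc_E)
  then show ?case using Suc.IH step_sym relpowp_Suc_I2 by metis
qed

lemma step_cons: "insdel_step u w \<Longrightarrow> insdel_step (x#u) (x#w)"
  unfolding insdel_step_def by (metis append_Cons)

lemma pow_cons: "(insdel_step ^^ k) u w \<Longrightarrow> (insdel_step ^^ k) (x#u) (x#w)"
proof (induction k arbitrary: w)
  case 0 then show ?case by simp
next
  case (Suc k)
  from Suc.prems obtain z where "(insdel_step ^^ k) u z" "insdel_step z w"
    by (auto elim: relpowp_Suc_E)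
  then show ?case using Suc.IH step_cons relpowp_Suc_I by metis
qed

lemma path_filter: "(insdel_step ^^ oth a w) w (filter ((=) a) w)"
proof (induction w)
  case Nil then show ?case by (simp add: oth_def)
next
  case (Cons x ws)
  show ?case
  proof (cases "x = a")
    case True
    then show ?thesis using pow_cons[OF Cons.IH, of x] by (simp add: oth_def)
  next
    case False
    have "insdel_step (x#ws) ws" unfolding insdel_step_def
      by (rule disjI1, rule exI[of _ "[]"], auto)
    then show ?thesis using Cons.IH False relpowp_Suc_I2 by (simp add: oth_def)
  qed
qed

lemma path_rep: "(insdel_step ^^ d) (replicate (m + d) a) (replicate m a)"
proof (induction d)
  case 0 then show ?case by simp
next
  case (Suc d)
  have "insdel_step (replicate (m + Suc d) a) (replicate (m + d) a)" unfolding insdel_step_def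
    by (rule disjI1, rule exI[of _ "[]"], auto)
  then show ?case using Suc.IH relpowp_Suc_I2 by metis
qed

lemma path_phi: "(insdel_step ^^ phi a m w) w (replicate m a)"
proof -
  have f: "filter ((=) a) w = replicate (cnt a w) a"
    unfolding cnt_def by (simp add: replicate_length_filter)
  have p2: "(insdel_step ^^ (if cnt a w \<ge> m then cnt a w - m else m - cnt a w))
     (replicate (cnt a w) a) (replicate m a)"
  proof (cases "cnt a w \<ge> m")
    case True
    then show ?thesis using path_rep[of "cnt a w - m" m a] by simp
  next
    case False
    then show ?thesis using pow_sym[OF path_rep[of "m - cnt a w" "cnt a w" a]] by simp
  qed
  show ?thesis unfolding phi_def relpowp_add using path_filter[of a w] f p2 by auto
qed

lemma dist_rep: "insdel_dist (replicate m a) v = phi a m v"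
proof -
  have ex: "(insdel_step ^^ phi a m v) (replicate m a) v"
    using pow_sym[OF path_phi] .
  have le: "insdel_dist (replicate m a) v \<le> phi a m v"
    unfolding insdel_dist_def using ex by (rule Least_le)
  have "(insdel_step ^^ insdel_dist (replicate m a) v) (replicate m a) v"
    unfolding insdel_dist_def using ex by (rule LeastI)
  from pow_phi[OF this, of a m] have "phi a m v \<le> insdel_dist (replicate m a) v"
    by (simp add: phi_def oth_def cnt_def)
  with le show ?thesis by simp
qed



lemma finite_words: "finite (words q n)"
proof -
  have "words q n = {xs. set xs \<subseteq> {..<q} \<and> length xs = n}" unfolding words_def by auto
  then show ?thesis using finite_lists_length_eq[of "{..<q}" n] by simp
qed

lemma words_Suc: "words q (Suc n) = (\<lambda>(x,v). x#v) ` ({..<q} \<times> words q n)"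
proof
  show "words q (Suc n) \<subseteq> (\<lambda>(x,v). x#v) ` ({..<q} \<times> words q n)"
  proof
    fix w assume "w \<in> words q (Suc n)"
    then obtain x v where "w = x#v" "x < q" "v \<in> words q n" unfolding words_def
      by (cases w) auto
    then show "w \<in> (\<lambda>(x,v). x#v) ` ({..<q} \<times> words q n)"
      using image_eqI[of w "\<lambda>(x,v). x#v" "(x,v)" "{..<q} \<times> words q n"] by simp
  qed
  show "(\<lambda>(x,v). x#v) ` ({..<q} \<times> words q n) \<subseteq> words q (Suc n)"
    unfolding words_def by auto
qed

lemma sum_words: "(\<Sum>v\<in>words q n. prod_list (map g v)) = (\<Sum>x<q. (g x::real))^n"
proof (induction n)
  case 0
  have "words q 0 = {[]}" unfolding words_def by auto
  then show ?case by simp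
next
  case (Suc n)
  have inj: "inj_on (\<lambda>(x,v). x#v) ({..<q} \<times> words q n)" by (auto simp: inj_on_def)
  have "(\<Sum>v\<in>words q (Suc n). prod_list (map g v)) =
      (\<Sum>p\<in>{..<q} \<times> words q n. prod_list (map g ((\<lambda>(x,v). x#v) p)))"
    unfolding words_Suc by (subst sum.reindex[OF inj]) (simp add: comp_def)
  also have "\<dots> = (\<Sum>p\<in>{..<q} \<times> words q n. (case p of (x, v) \<Rightarrow> g x * prod_list (map g v)))"
    by (rule sum.cong) auto
  also have "\<dots> = (\<Sum>x<q. g x) * (\<Sum>v\<in>words q n. prod_list (map g v))"
    by (simp only: sum_product sum.cartesian_product)
  finally show ?case using Suc.IH by simp
qed

lemma prod_g: "prod_list (map (\<lambda>x. if x = a then A else B) v) = (A::real)^cnt a v * B^oth a v"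
  by (induction v) (auto simp: cnt_def oth_def)

lemma cnt_oth: "cnt a v + oth a v = length v"
proof -
  have e: "(\<lambda>x. x \<noteq> a) = (\<lambda>x. a \<noteq> x)" by auto
  show ?thesis unfolding cnt_def oth_def e using sum_length_filter_compl[of "(=) a" v]
    by simp
qed

definition Hn :: "nat \<Rightarrow> real \<Rightarrow> real" where
  "Hn q x = x * ln (real q - 1) - x * ln x - (1 - x) * ln (1 - x)"

lemma card_upper:
  assumes aq: "a < q" and q2: "q \<ge> 2" and k0: "0 \<le> \<kappa>" and kq: "\<kappa> \<le> (real q - 1) / real q"
  shows "real (card {v\<in>words q n. real (oth a v) \<le> \<kappa> * real n}) * exp (- (real n * Hn q \<kappa>)) \<le> 1"
proof -
  define r where "r = \<kappa> / (real q - 1)"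
  define g where "g = (\<lambda>x. if x = a then 1 - \<kappa> else r)"
  define S where "S = {v\<in>words q n. real (oth a v) \<le> \<kappa> * real n}"
  define E where "E = exp (- (real n * Hn q \<kappa>))"
  have qpos: "real q - 1 > 0" using q2 by simp
  have "(real q - 1) / real q < 1" using q2 by simp
  then have k1: "\<kappa> < 1" using kq by linarith
  have r0: "r \<ge> 0" unfolding r_def using k0 qpos by simp
  have rk: "r \<le> 1 - \<kappa>" unfolding r_def using kq qpos q2 by (simp add: field_simps)
  have gsum: "(\<Sum>x<q. g x) = 1"
  proof -
    have "(\<Sum>x<q. g x) = g a + (\<Sum>x\<in>{..<q} - {a}. g x)"
      using aq by (simp add: sum.remove)
    also have "\<dots> = (1 - \<kappa>) + (real q - 1) * r"
      using aq by (simp add: g_def card_Diff_singleton of_nat_diff)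
    also have "\<dots> = 1" unfolding r_def using qpos by simp
    finally show ?thesis .
  qed
  have wS: "E \<le> prod_list (map g v)" if "v \<in> S" for v
  proof -
    have len: "length v = n" and ov: "real (oth a v) \<le> \<kappa> * real n"
      using that unfolding S_def words_def by auto
    have cv: "real (cnt a v) = real n - real (oth a v)" using cnt_oth[of a v] len by simp
    have pw: "prod_list (map g v) = (1-\<kappa>)^cnt a v * r^oth a v"
      unfolding g_def by (rule prod_g)
    show ?thesis
    proof (cases "\<kappa> = 0")
      case True
      then have "oth a v = 0" using ov by simp
      then show ?thesis using True pw by (simp add: E_def Hn_def)
    next
      case False
      then have kp: "\<kappa> > 0" using k0 by simp
      have rp: "r > 0" unfolding r_def using kp qpos by simp
      have lr: "ln r = ln \<kappa> - ln (real q - 1)" unfolding r_def using kp qpos by (simp add: ln_div)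
      have lrk: "ln r \<le> ln (1 - \<kappa>)" using rp rk by simp
      have "prod_list (map g v) = exp (real (cnt a v) * ln (1-\<kappa>) + real (oth a v) * ln r)"
        using pw rp k1 by (simp add: exp_add ln_realpow[symmetric])
      moreover have "- (real n * Hn q \<kappa>) \<le> real (cnt a v) * ln (1-\<kappa>) + real (oth a v) * ln r"
      proof -
        have nn: "0 \<le> (\<kappa> * real n - real (oth a v)) * (ln (1-\<kappa>) - ln r)"
          using ov lrk by simp
        have "real (cnt a v) * ln (1-\<kappa>) + real (oth a v) * ln r - (- (real n * Hn q \<kappa>))
           = (\<kappa> * real n - real (oth a v)) * (ln (1-\<kappa>) - ln r)"
          unfolding cv Hn_def lr by (simp add: algebra_simps)
        with nn show ?thesis by linarith
      qed
      ultimately show ?thesis unfolding E_def by simp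
    qed
  qed
  have fS: "finite S" unfolding S_def using finite_words by simp
  have "real (card S) * E = (\<Sum>v\<in>S. E)" by simp
  also have "\<dots> \<le> (\<Sum>v\<in>S. prod_list (map g v))" by (rule sum_mono) (rule wS)
  also have "\<dots> \<le> (\<Sum>v\<in>words q n. prod_list (map g v))"
  proof (rule sum_mono2[OF finite_words])
    show "S \<subseteq> words q n" unfolding S_def by auto
    show "0 \<le> prod_list (map g b)" for b
      unfolding g_def prod_g using r0 k1 by simp
  qed
  also have "\<dots> = 1" using sum_words[where g=g and q=q and n=n] gsum by simp
  finally show ?thesis unfolding S_def E_def .
qed

lemma card_lower:
  assumes aq: "a < q" and jn: "j \<le> n"
  shows "(n choose j) * (q - 1)^j \<le> card {v\<in>words q n. oth a v \<le> j}"
proof -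
  define A where "A = {S. S \<subseteq> {..<n} \<and> card S = j}"
  define B where "B = (\<lambda>S::nat set. PiE S (\<lambda>_. {..<q} - {a}))"
  define h where "h = (\<lambda>(S, f). map (\<lambda>i. if i \<in> S then f i else a) [0..<n])"
  have fA: "finite A" unfolding A_def by simp
  have cA: "card A = n choose j" unfolding A_def using n_subsets[of "{..<n}" j] by simp
  have cB: "card (B S) = (q - 1)^j" if "S \<in> A" for S
  proof -
    have fS: "finite S" using that unfolding A_def by (auto intro: finite_subset)
    have "card (B S) = (\<Prod>i\<in>S. card ({..<q} - {a}))" unfolding B_def by (rule card_PiE[OF fS])
    also have "\<dots> = (q-1)^card S" using aq by simp
    finally show ?thesis using that unfolding A_def by simp
  qed
  have cSig: "card (Sigma A B) = (n choose j) * (q - 1)^j"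
  proof -
    have "card (Sigma A B) = (\<Sum>S\<in>A. card (B S))"
      by (rule card_SigmaI[OF fA]) (auto simp: B_def A_def intro!: finite_PiE intro: finite_subset)
    also have "\<dots> = (\<Sum>S\<in>A. (q-1)^j)" by (rule sum.cong) (auto simp: cB)
    finally show ?thesis using cA by simp
  qed
  have inj: "inj_on h (Sigma A B)"
  proof (rule inj_onI)
    fix p1 p2 assume p1: "p1 \<in> Sigma A B" and p2: "p2 \<in> Sigma A B" and eq: "h p1 = h p2"
    obtain S1 f1 where P1: "p1 = (S1, f1)" by fastforce
    obtain S2 f2 where P2: "p2 = (S2, f2)" by fastforce
    have S1: "S1 \<subseteq> {..<n}" "f1 \<in> B S1" using p1 P1 A_def by auto
    have S2: "S2 \<subseteq> {..<n}" "f2 \<in> B S2" using p2 P2 A_def by auto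
    define F1 where "F1 = (\<lambda>i. if i \<in> S1 then f1 i else a)"
    define F2 where "F2 = (\<lambda>i. if i \<in> S2 then f2 i else a)"
    have h1: "h p1 = map F1 [0..<n]" unfolding h_def P1 F1_def by simp
    have h2: "h p2 = map F2 [0..<n]" unfolding h_def P2 F2_def by simp
    have pt0: "F1 i = F2 i" if "i < n" for i
      using eq that by (auto simp: h1 h2)
    have pt: "(if i \<in> S1 then f1 i else a) = (if i \<in> S2 then f2 i else a)" if "i < n" for i
      using pt0[OF that] unfolding F1_def F2_def .
    have "S1 = S2"
    proof
      show "S1 \<subseteq> S2"
      proof
        fix i assume i: "i \<in> S1"
        then have "i < n" "f1 i \<noteq> a" using S1 unfolding B_def by auto
        then show "i \<in> S2" using pt[of i] i by (auto split: if_splits)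
      qed
      show "S2 \<subseteq> S1"
      proof
        fix i assume i: "i \<in> S2"
        then have "i < n" "f2 i \<noteq> a" using S2 unfolding B_def by auto
        then show "i \<in> S1" using pt[of i] i by (auto split: if_splits)
      qed
    qed
    moreover have "f1 = f2"
    proof (rule extensionalityI)
      show "f1 \<in> extensional S1" using S1 unfolding B_def by (simp add: PiE_iff)
      show "f2 \<in> extensional S1" using S2 \<open>S1 = S2\<close> unfolding B_def by (simp add: PiE_iff)
      show "f1 x = f2 x" if "x \<in> S1" for x using pt[of x] that S1 \<open>S1 = S2\<close> by auto
    qed
    ultimately show "p1 = p2" using P1 P2 by simp
  qed
  have img: "h ` Sigma A B \<subseteq> {v\<in>words q n. oth a v \<le> j}"
  proof
    fix w assume "w \<in> h ` Sigma A B"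
    then obtain S f where Sf: "S \<in> A" "f \<in> B S" and w: "w = h (S, f)" by auto
    have fS: "finite S" and cS: "card S = j" and Sn: "S \<subseteq> {..<n}"
      using Sf(1) unfolding A_def by (auto intro: finite_subset)
    have wl: "w = map (\<lambda>i. if i \<in> S then f i else a) [0..<n]" using w h_def by simp
    have "set w \<subseteq> {..<q}" using Sf(2) aq unfolding wl B_def by (auto simp: PiE_iff)
    moreover have "length w = n" unfolding wl by simp
    moreover note \<open>length w = n\<close>
    moreover have "oth a w \<le> j"
    proof -
      have "oth a w = card {i. i < n \<and> w ! i \<noteq> a}"
        unfolding oth_def length_filter_conv_card using \<open>length w = n\<close> by simp
      also have "\<dots> \<le> card S" by (rule card_mono[OF fS]) (auto simp: wl split: if_splits)
      finally show ?thesis using cS by simp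
    qed
    ultimately show "w \<in> {v\<in>words q n. oth a v \<le> j}" unfolding words_def by simp
  qed
  have "card (Sigma A B) \<le> card {v\<in>words q n. oth a v \<le> j}"
    by (rule card_inj_on_le[OF inj img]) (simp add: finite_words)
  then show ?thesis using cSig by simp
qed



lemma alg1: "(s::real) * a = r * b \<Longrightarrow> a * (P * J) * Q * (s * M) = b * P * (Q * M) * (r * J)"
proof -
  assume h: "s * a = r * b"
  have "a * (P * J) * Q * (s * M) = (s * a) * (P * J * Q * M)" by (simp only: ac_simps)
  also have "\<dots> = (r * b) * (P * J * Q * M)" by (simp only: h)
  also have "\<dots> = b * P * (Q * M) * (r * J)" by (simp only: ac_simps)
  finally show ?thesis .
qed

lemma binom_max:
  assumes jn: "j \<le> n"
  shows "real n ^ n \<le> real (n+1) * (real (n choose j) * real j ^ j * real (n-j) ^ (n-j))"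
proof -
  define T where "T i = real (n choose i) * real j ^ i * real (n-j) ^ (n-i)" for i
  have T0: "T i \<ge> 0" for i unfolding T_def by simp
  have sumT: "real n ^ n = (\<Sum>i\<le>n. T i)"
  proof -
    have e: "real j + real (n-j) = real n" using jn by simp
    have "(real j + real (n-j)) ^ n = (\<Sum>i\<le>n. T i)" unfolding binomial_ring T_def by simp
    then show ?thesis unfolding e .
  qed
  have rec: "T (Suc i) * (real (Suc i) * real (n-j)) = T i * (real (n - i) * real j)" if "i < n" for i
  proof -
    have c: "Suc i * (n choose Suc i) = (n - i) * (n choose i)"
      using binomial_absorption[of i n] binomial_absorb_comp[of n i] by simp
    have c': "real (Suc i) * real (n choose Suc i) = real (n - i) * real (n choose i)"
      using arg_cong[OF c, of real] by (simp only: of_nat_mult)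
    have e: "n - i = Suc (n - Suc i)" using that by simp
    have t1: "T (Suc i) = real (n choose Suc i) * (real j ^ i * real j) * real (n-j) ^ (n - Suc i)"
      unfolding T_def by (simp only: power_Suc2)
    have t2: "T i = real (n choose i) * real j ^ i * (real (n-j) ^ (n - Suc i) * real (n-j))"
      unfolding T_def e by (simp only: power_Suc2)
    show ?thesis unfolding t1 t2 by (rule alg1[OF c'])
  qed
  have down: "T (Suc i) \<le> T i" if "j \<le> i" "i < n" for i
  proof -
    have pos: "real (Suc i) * real (n-j) > 0" using that by simp
    have "real (n - i) * real j \<le> real (n-j) * real (Suc i)"
      by (rule mult_mono) (use that in auto)
    then have "real (n - i) * real j \<le> real (Suc i) * real (n-j)" by (simp only: mult.commute)
    then have "T i * (real (n - i) * real j) \<le> T i * (real (Suc i) * real (n-j))"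
      using T0 by (rule mult_left_mono)
    then have "T (Suc i) * (real (Suc i) * real (n-j)) \<le> T i * (real (Suc i) * real (n-j))"
      using rec[OF that(2)] by simp
    then show ?thesis using pos by (rule mult_right_le_imp_le)
  qed
  have up: "T i \<le> T (Suc i)" if "i < j" for i
  proof (cases "j = n")
    case True
    then have "T i = 0" unfolding T_def using that by simp
    then show ?thesis using T0 by simp
  next
    case False
    then have ij: "i < n" using that jn by simp
    have pos: "real (Suc i) * real (n-j) > 0" using False jn by simp
    have "real (n-j) * real (Suc i) \<le> real (n - i) * real j"
      by (rule mult_mono) (use that in auto)
    then have "real (Suc i) * real (n-j) \<le> real (n - i) * real j" by (simp only: mult.commute)
    then have "T i * (real (Suc i) * real (n-j)) \<le> T i * (real (n - i) * real j)"
      using T0 by (rule mult_left_mono)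
    then have "T i * (real (Suc i) * real (n-j)) \<le> T (Suc i) * (real (Suc i) * real (n-j))"
      using rec[OF ij] by simp
    then show ?thesis using pos by (rule mult_right_le_imp_le)
  qed
  have Tj: "T i \<le> T j" if "i \<le> n" for i
  proof (cases "i \<le> j")
    case True
    have "T i \<le> T k" if "i \<le> k" "k \<le> j" for k using that
    proof (induction k rule: dec_induct)
      case base then show ?case by simp
    next
      case (step k) then show ?case using up[of k] by simp
    qed
    then show ?thesis using True by simp
  next
    case False
    then have ji: "j \<le> i" by simp
    have "T k \<le> T j" if "j \<le> k" "k \<le> i" for k using that
    proof (induction k rule: dec_induct)
      case base then show ?case by simp
    next
      case (step k) then show ?case using down[of k] \<open>i \<le> n\<close> by simp
    qed
    then show ?thesis using ji by simp
  qed
  have "(\<Sum>i\<le>n. T i) \<le> (\<Sum>i\<le>n. T j)" by (rule sum_mono) (use Tj in simp)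
  also have "\<dots> = real (n+1) * T j" by simp
  finally show ?thesis using sumT unfolding T_def by simp
qed

lemma ln_pow_self: "ln (real k ^ k) = real k * ln (real k)"
  by (cases "k = 0") (simp_all add: ln_realpow)

definition Fn :: "nat \<Rightarrow> nat \<Rightarrow> real \<Rightarrow> real" where
  "Fn q n y = y * ln (real q - 1) - y * ln y - (real n - y) * ln (real n - y) + real n * ln (real n)"

lemma F_eq:
  assumes "n > 0" "0 \<le> y" "y < real n"
  shows "real n * Hn q (y / real n) = Fn q n y"
proof (cases "y = 0")
  case True then show ?thesis by (simp add: Hn_def Fn_def)
next
  case False
  then have yp: "y > 0" using assms by simp
  have np: "real n > 0" using assms by simp
  have l1: "ln (y / real n) = ln y - ln (real n)" using yp np by (simp add: ln_div)
  have e2: "1 - y / real n = (real n - y) / real n" using np by (simp add: field_simps)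
  have l2: "ln (1 - y / real n) = ln (real n - y) - ln (real n)"
    unfolding e2 using assms np by (simp add: ln_div)
  have "real n * Hn q (y / real n) =
     (real n * (y / real n)) * ln (real q - 1) - (real n * (y / real n)) * (ln y - ln (real n))
     - (real n * (1 - y / real n)) * (ln (real n - y) - ln (real n))"
    unfolding Hn_def l1 l2 by (simp add: algebra_simps)
  also have "\<dots> = Fn q n y" unfolding Fn_def using np by (simp add: field_simps)
  finally show ?thesis .
qed

lemma F_diff:
  assumes q2: "q \<ge> 2" and jy: "real j \<le> y" and yj: "y < real j + 1" and yn: "y < real n"
  shows "Fn q n y - Fn q n (real j) \<le> ln (real q - 1) + 2 + ln (real n)"
proof -
  define d where "d = y - real j"
  have d0: "0 \<le> d" "d < 1" using jy yj unfolding d_def by auto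
  have jn: "j < n" using jy yn by linarith
  have Lq: "ln (real q - 1) \<ge> 0" using q2 by simp
  have a: "d * ln (real q - 1) \<le> ln (real q - 1)"
    using d0 Lq by (simp add: mult_left_le_one_le)
  have b: "real j * ln (real j) - y * ln y \<le> 1"
  proof (cases "d = 0")
    case True then show ?thesis unfolding d_def by simp
  next
    case False
    then have dp: "d > 0" using d0 by simp
    have yp: "y > 0" using dp jy unfolding d_def by simp
    have "real j * ln (real j) \<le> real j * ln y"
    proof (cases "j = 0")
      case True then show ?thesis by simp
    next
      case False
      then show ?thesis using jy by (intro mult_left_mono) auto
    qed
    moreover have "ln d \<le> ln y" using dp jy unfolding d_def by simp
    moreover have "- ln d \<le> 1 / d - 1"
      using ln_le_minus_one[of "1/d"] dp by (simp add: ln_div)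
    then have "- (d * ln d) \<le> 1 - d" using dp by (simp add: field_simps)
    moreover have "y = real j + d" unfolding d_def by simp
    ultimately have "real j * ln (real j) - y * ln y \<le> - (d * ln y)"
      by (simp add: algebra_simps)
    also have "\<dots> \<le> - (d * ln d)" using \<open>ln d \<le> ln y\<close> dp by (simp add: mult_left_mono)
    also have "\<dots> \<le> 1" using \<open>- (d * ln d) \<le> 1 - d\<close> d0 by linarith
    finally show ?thesis .
  qed
  have c: "(real n - real j) * ln (real n - real j) - (real n - y) * ln (real n - y) \<le> 1 + ln (real n)"
  proof -
    define A where "A = real n - real j"
    define B where "B = real n - y"
    have Bp: "B > 0" unfolding B_def using yn by simp
    have A1: "A \<ge> 1" unfolding A_def using jn by simp
    have An: "A \<le> real n" unfolding A_def by simp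
    have AB: "A = B + d" unfolding A_def B_def d_def by simp
    have "ln (A / B) \<le> A / B - 1" using ln_le_minus_one[of "A/B"] Bp A1 by simp
    then have "ln A - ln B \<le> A / B - 1" using Bp A1 by (simp add: ln_div)
    then have t1: "B * (ln A - ln B) \<le> d" using Bp AB
      by (simp add: field_simps)
    have lA: "0 \<le> ln A" "ln A \<le> ln (real n)" using A1 An by auto
    have t2: "d * ln A \<le> ln (real n)"
      using d0 lA mult_left_le_one_le[of "ln A" d] by linarith
    have "A * ln A - B * ln B = B * (ln A - ln B) + d * ln A" using AB by (simp add: algebra_simps)
    also have "\<dots> \<le> 1 + ln (real n)" using t1 t2 d0 by linarith
    finally show ?thesis unfolding A_def B_def .
  qed
  have "Fn q n y - Fn q n (real j) = d * ln (real q - 1)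
      + (real j * ln (real j) - y * ln y)
      + ((real n - real j) * ln (real n - real j) - (real n - y) * ln (real n - y))"
    unfolding Fn_def d_def by (simp add: algebra_simps)
  then show ?thesis using a b c by linarith
qed



theorem mainTheorem14:
  fixes q :: nat and \<tau> :: real
  assumes "q \<ge> 2" and "\<tau> \<ge> 0"
  shows "\<exists>C N. \<forall>(n::nat) (m::nat) r.
     n \<ge> N \<and> n \<ge> 1 \<and> real n - \<tau> * real n \<le> real m \<and> real m \<le> real n + \<tau> * real n \<and>
     r \<in> const_words q m \<and>
     (\<tau> * real n + real n - real m) / (2 * real n) \<le> (real q - 1) / real q \<longrightarrow>
     (\<exists>e. \<bar>e\<bar> \<le> C * log (real q) (real n) / real n \<and>
        real (card (insdel_ball q r (\<tau> * real n) \<inter> words q n)) =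
          real q powr (real n * (Hq q ((\<tau> * real n + real n - real m) / (2 * real n)) + e)))"
proof -
  note q2 = assms(1)
  define C where "C = 3 + (2 + ln (real q - 1)) / ln 2"
  have "\<forall>(n::nat) (m::nat) r.
     n \<ge> 2 \<and> n \<ge> 1 \<and> real n - \<tau> * real n \<le> real m \<and> real m \<le> real n + \<tau> * real n \<and>
     r \<in> const_words q m \<and>
     (\<tau> * real n + real n - real m) / (2 * real n) \<le> (real q - 1) / real q \<longrightarrow>
     (\<exists>e. \<bar>e\<bar> \<le> C * log (real q) (real n) / real n \<and>
        real (card (insdel_ball q r (\<tau> * real n) \<inter> words q n)) =
          real q powr (real n * (Hq q ((\<tau> * real n + real n - real m) / (2 * real n)) + e)))"
  proof (intro allI impI)
    fix n m :: nat and r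
    assume H: "n \<ge> 2 \<and> n \<ge> 1 \<and> real n - \<tau> * real n \<le> real m \<and> real m \<le> real n + \<tau> * real n \<and>
     r \<in> const_words q m \<and>
     (\<tau> * real n + real n - real m) / (2 * real n) \<le> (real q - 1) / real q"
    then have n2: "n \<ge> 2" and m1: "real n - \<tau> * real n \<le> real m" and m2: "real m \<le> real n + \<tau> * real n"
      and rc: "r \<in> const_words q m" and kq: "(\<tau> * real n + real n - real m) / (2 * real n) \<le> (real q - 1) / real q"
      by auto
    obtain a where aq: "a < q" and r: "r = replicate m a" using rc unfolding const_words_def by auto
    define y where "y = (\<tau> * real n + real n - real m) / 2"
    define \<kappa> where "\<kappa> = y / real n"
    have np: "real n > 0" using n2 by simp
    have keq: "(\<tau> * real n + real n - real m) / (2 * real n) = \<kappa>"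
      unfolding \<kappa>_def y_def by (simp add: field_simps)
    have y0: "0 \<le> y" unfolding y_def using m2 by simp
    have k0: "0 \<le> \<kappa>" unfolding \<kappa>_def using y0 np by simp
    have kq': "\<kappa> \<le> (real q - 1) / real q" using kq keq by simp
    have "(real q - 1) / real q < 1" using q2 by simp
    then have k1: "\<kappa> < 1" using kq' by linarith
    have yn: "y < real n" using k1 np unfolding \<kappa>_def by (simp add: field_simps)
    have yk: "\<kappa> * real n = y" unfolding \<kappa>_def using np by simp
    define j where "j = nat \<lfloor>y\<rfloor>"
    have jy: "real j \<le> y" unfolding j_def using y0 by linarith
    have yj: "y < real j + 1" unfolding j_def using y0 by linarith
    have jn: "j < n" using jy yn by linarith
    define S where "S = {v\<in>words q n. real (oth a v) \<le> y}"
    have Seq: "insdel_ball q r (\<tau> * real n) \<inter> words q n = S"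
    proof (rule set_eqI)
      fix v
      show "v \<in> insdel_ball q r (\<tau> * real n) \<inter> words q n \<longleftrightarrow> v \<in> S"
      proof (cases "v \<in> words q n")
        case False then show ?thesis unfolding S_def by auto
      next
        case True
        then have sv: "set v \<subseteq> {..<q}" and lv: "length v = n" unfolding words_def by auto
        have co: "real (cnt a v) + real (oth a v) = real n" using cnt_oth[of a v] lv
          by (metis of_nat_add)
        have d: "insdel_dist r v = phi a m v" unfolding r by (rule dist_rep)
        have pe: "real (phi a m v) = real (oth a v) +
           (if cnt a v \<ge> m then real (cnt a v) - real m else real m - real (cnt a v))"
          unfolding phi_def by (auto simp: of_nat_diff)
        have "real (phi a m v) \<le> \<tau> * real n \<longleftrightarrow> real (oth a v) \<le> y"
          unfolding pe y_def using co m1 m2 by (cases "cnt a v \<ge> m") (auto simp: field_simps)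
        moreover have "max (real (length r) - \<tau> * real n) 0 \<le> real (length v)"
          using lv m2 r by simp
        moreover have "real (length v) \<le> real (length r) + \<tau> * real n" using lv m1 r by simp
        ultimately show ?thesis using True sv d by (auto simp: insdel_ball_def S_def)
      qed
    qed
    have Seq2: "S = {v\<in>words q n. oth a v \<le> j}"
    proof -
      have "real o' \<le> y \<longleftrightarrow> o' \<le> j" for o' :: nat
      proof
        assume "real o' \<le> y"
        then have "real o' < real (j + 1)" using yj by simp
        then show "o' \<le> j" by linarith
      next
        assume "o' \<le> j" then show "real o' \<le> y" using jy by linarith
      qed
      then show ?thesis unfolding S_def by auto
    qed
    have Seq3: "S = {v\<in>words q n. real (oth a v) \<le> \<kappa> * real n}" unfolding S_def yk ..
    have low: "(n choose j) * (q - 1)^j \<le> card S" unfolding Seq2 using card_lower[OF aq] jn by simp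
    have pos1: "(n choose j) * (q - 1)^j \<ge> 1" using jn q2
    proof -
      have "0 < n choose j" using jn by simp
      moreover have "0 < (q - 1)^j" using q2 by simp
      ultimately have "0 < (n choose j) * (q - 1)^j" by simp
      then show ?thesis by linarith
    qed
    have "card S \<ge> 1" using low pos1 by (rule order.trans[rotated])
    then have cpos: "real (card S) > 0" by simp
    define L where "L = ln (real (card S))"
    have upper: "L \<le> Fn q n y"
    proof -
      have "real (card S) * exp (- (real n * Hn q \<kappa>)) \<le> 1"
        unfolding Seq3 by (rule card_upper[OF aq q2 k0 kq'])
      then have "real (card S) \<le> exp (real n * Hn q \<kappa>)"
        by (simp add: exp_minus field_simps)
      then have "ln (real (card S)) \<le> ln (exp (real n * Hn q \<kappa>))" using cpos by (subst ln_le_cancel_iff) auto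
      then have "L \<le> real n * Hn q \<kappa>" unfolding L_def by simp
      also have "real n * Hn q \<kappa> = Fn q n y" unfolding \<kappa>_def by (rule F_eq) (use n2 y0 yn in auto)
      finally show ?thesis .
    qed
    have lower: "Fn q n (real j) - ln (real n + 1) \<le> L"
    proof -
      have Cp: "real (n choose j) > 0" using jn by simp
      have qp: "real q - 1 > 0" using q2 by simp
      have bm: "real n ^ n \<le> real (n+1) * (real (n choose j) * real j ^ j * real (n-j) ^ (n-j))"
        using binom_max jn by simp
      have p1: "real j ^ j > 0" using jn by (cases "j = 0") auto
      have p2: "real (n-j) ^ (n-j) > 0" using jn by simp
      have "ln (real n ^ n) \<le> ln (real (n+1) * (real (n choose j) * real j ^ j * real (n-j) ^ (n-j)))"
        using bm np Cp p1 p2 by (subst ln_le_cancel_iff) auto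
      then have A: "real n * ln (real n) \<le> ln (1 + real n) + ln (real (n choose j)) + real j * ln (real j)
          + real (n-j) * ln (real (n-j))"
        using Cp p1 p2 by (simp add: ln_mult ln_pow_self del: of_nat_diff)
      have B: "ln (real (n choose j)) + real j * ln (real q - 1) \<le> L"
      proof -
        have "real ((n choose j) * (q - 1)^j) \<le> real (card S)" using low by (simp only: of_nat_le_iff)
        moreover have "real (q - 1) = real q - 1" using q2 by simp
        ultimately have "real (n choose j) * (real q - 1) ^ j \<le> real (card S)"
          by (simp only: of_nat_mult of_nat_power)
        then have "ln (real (n choose j) * (real q - 1) ^ j) \<le> L"
          unfolding L_def using Cp qp cpos by (subst ln_le_cancel_iff) auto
        then show ?thesis using Cp qp by (simp add: ln_mult ln_realpow)
      qed
      have e0: "real (n-j) = real n - real j" using jn by simp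
      have e1: "ln (1 + real n) = ln (real n + 1)" by (simp add: add.commute)
      have A': "real n * ln (real n) \<le> ln (real n + 1) + ln (real (n choose j)) + real j * ln (real j)
          + (real n - real j) * ln (real n - real j)"
        using A unfolding e0 e1 .
      show ?thesis unfolding Fn_def using A' B by linarith
    qed
    have diff: "Fn q n y - Fn q n (real j) \<le> ln (real q - 1) + 2 + ln (real n)"
      by (rule F_diff[OF q2 jy yj yn])
    have lnn: "ln (real n) \<ge> ln 2" using n2 by simp
    have ln2: "ln (2::real) > 0" by simp
    have lnn1: "ln (real n + 1) \<le> 2 * ln (real n)"
    proof -
      have "2 * real n \<le> real n * real n" using n2 by (intro mult_right_mono) auto
      moreover have "real n ^ 2 = real n * real n" by (simp add: power2_eq_square)
      moreover have "real n \<ge> 2" using n2 by simp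
      ultimately have "real n + 1 \<le> real n ^ 2" by linarith
      then have "ln (real n + 1) \<le> ln (real n ^ 2)" using np by (subst ln_le_cancel_iff) auto
      then show ?thesis using np by (simp add: ln_realpow)
    qed
    have lq: "0 \<le> ln (real q - 1)" using q2 by simp
    have cst: "2 + ln (real q - 1) \<le> (2 + ln (real q - 1)) / ln 2 * ln (real n)"
    proof -
      have "1 \<le> ln (real n) / ln 2" using lnn ln2 by simp
      then have "(2 + ln (real q - 1)) * 1 \<le> (2 + ln (real q - 1)) * (ln (real n) / ln 2)"
        using lq by (intro mult_left_mono) auto
      then show ?thesis by simp
    qed
    have bound: "\<bar>L - Fn q n y\<bar> \<le> C * ln (real n)"
    proof -
      have Ce: "C * ln (real n) = 3 * ln (real n) + (2 + ln (real q - 1)) / ln 2 * ln (real n)"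
        unfolding C_def by (simp add: distrib_right)
      show ?thesis unfolding abs_le_iff Ce using upper lower diff lnn1 cst lnn ln2 lq by linarith
    qed
    have lqp: "ln (real q) > 0" using q2 by simp
    have Hq_eq: "Hq q \<kappa> = Hn q \<kappa> / ln (real q)"
    proof (cases "\<kappa> = 0")
      case True then show ?thesis by (simp add: Hq_def Hn_def)
    next
      case False then show ?thesis using k1 unfolding Hq_def Hn_def log_def
        by (simp add: diff_divide_distrib times_divide_eq_right)
    qed
    have nH: "real n * Hn q \<kappa> = Fn q n y" unfolding \<kappa>_def by (rule F_eq) (use n2 y0 yn in auto)
    define e where "e = L / (real n * ln (real q)) - Hq q \<kappa>"
    have e_eq: "e = (L - Fn q n y) / (real n * ln (real q))"
      unfolding e_def Hq_eq nH[symmetric] using np lqp by (simp add: field_simps)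
    have "\<bar>e\<bar> = \<bar>L - Fn q n y\<bar> / (real n * ln (real q))"
      unfolding e_eq using np lqp by (simp add: abs_div)
    also have "\<dots> \<le> C * ln (real n) / (real n * ln (real q))"
      using bound np lqp by (simp add: divide_right_mono)
    also have "\<dots> = C * log (real q) (real n) / real n" unfolding log_def by simp
    finally have eb: "\<bar>e\<bar> \<le> C * log (real q) (real n) / real n" .
    have "real q powr (real n * (Hq q \<kappa> + e)) = exp (L)"
    proof -
      have "real n * (Hq q \<kappa> + e) = L / ln (real q)" unfolding e_def using np lqp by (simp add: field_simps)
      then show ?thesis unfolding powr_def using q2 lqp by simp
    qed
    also have "exp L = real (card S)" unfolding L_def using cpos by simp
    finally show "\<exists>e. \<bar>e\<bar> \<le> C * log (real q) (real n) / real n \<and>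
        real (card (insdel_ball q r (\<tau> * real n) \<inter> words q n)) =
          real q powr (real n * (Hq q ((\<tau> * real n + real n - real m) / (2 * real n)) + e))"
      using eb unfolding Seq keq by metis
  qed
  then show ?thesis by blast
qed


end
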